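(* Assume that spacetime is Minkowski in $1+n$ dimensions and that the Nontrivial Poincaré Invariance postulate and the Existence of Classical Momentum postulate (both stated in the context) hold for particles of the type $\mathcal{P}$, which have mass $m>0$. Let $p_{\text{rest}}=(m,0,\ldots,0)^{\text{t}}$ and consider, for any internal degrees of freedom of such a particle with finite-dimensional state space $\mathcal{S}\subset\mathbb{R}^{d+1}$, the maps $R^{\text{st}}_{p_{\text{rest}}}(P(x,\Lambda)):\mathcal{S}\to\mathcal{S}$ describing how the internal state $\zeta$ of the classical-momentum state $Z^{\text{class}}_{p_{\text{rest}},\zeta}$ transforms under $P(x,\Lambda)\in\mathfrak{Poin}$, i.e. $Z^{\text{class}}_{p_{\text{rest}},\zeta}\mapsto Z^{\text{class}}_{\Lambda p_{\text{rest}},\,R^{\text{st}}_{p_{\text{rest}}}(P(x,\Lambda))\zeta}$. Then $R^{\text{st}}_{p_{\text{rest}}}$ restricted to spatial rotations is a representation of $\mathrm{SO}(n)$: $$R^{\text{st}}_{p_{\text{rest}}}(P(\vec{0},O_2))\,R^{\text{st}}_{p_{\text{rest}}}(P(\vec{0},O_1))=R^{\text{st}}_{p_{\text{rest}}}(P(\vec{0},O_2O_1))$$ for all $O_i=\begin{pmatrix}1&0\\0&\tilde O_i\end{pmatrix}$ with $\tilde O_i\in\mathrm{SO}(n)$, $i\in\{1,2\}$.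
   Context: Minkowski spacetime in $1+n$ dimensions has metric $\eta=\mathrm{diag}(-1,1,\ldots,1)$ (units with $c=1$). A Poincaré transformation $P(a,\Lambda)$ acts by $x\mapsto \Lambda x+a$ with $a\in\mathbb{R}^{1+n}$ and $\Lambda^{\text{t}}\eta\Lambda=\eta$; they compose as $P(a',\Lambda')\circ P(a,\Lambda)=P(a'+\Lambda'a,\Lambda'\Lambda)$. $\mathfrak{L}$ denotes the proper orthochronous Lorentz group (Lorentz transformations continuously connected to the identity: rotations and boosts) and $\mathfrak{Poin}=\{P(a,\Lambda):\Lambda\in\mathfrak{L}\}$. General probabilistic theories (GPTs): a finite-dimensional system of dimension $d$ has a closed convex state space $\mathcal{S}=\{(1,\tilde\zeta)^{\text{t}}:\tilde\zeta\in\tilde{\mathcal{S}}\}\subset\mathbb{R}^{d+1}$, a convex set of effects $\mathcal{E}\subseteq\{\varepsilon\in\mathbb{R}^{d+1}:0\le\varepsilon\cdot\zeta\le1\ \forall\zeta\in\mathcal{S}\}$ containing the unit effect $u=(1,0,\ldots,0)^{\text{t}}$ and the zero effect, with outcome probability $\varepsilon(\zeta)=\varepsilon\cdot\zeta$, and a set of allowed linear transformations $\mathcal{S}\to\mathcal{S}$. A continuous-dimensional GPT has sets $\mathscr{S}$ (states), $\mathscr{E}$ (effects, maps $\mathscr{S}\to[0,1]$), $\mathscr{T}$ (maps $\mathscr{S}\to\mathscr{S}$). A GPT is invariant under a group $\mathfrak{G}$ of changes of reference frame if there are representations $\hat{\mathbf{R}}^{\text{st}},\hat{\mathbf{R}}^{\text{ef}}$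 of $\mathfrak{G}$ (identity to identity, $\hat{\mathbf{R}}(G_2)\circ\hat{\mathbf{R}}(G_1)=\hat{\mathbf{R}}(G_2\circ G_1)$) on $\mathscr{S}$ and $\mathscr{E}$ such that under $G\in\mathfrak{G}$ states and effects transform as $Z\mapsto\hat{\mathbf{R}}^{\text{st}}(G)[Z]$, $\hat E\mapsto\hat{\mathbf{R}}^{\text{ef}}(G)[\hat E]$, and outcome probabilities are invariant: $\hat E'[Z']=\hat E[Z]$. It is nontrivially invariant if these representations are not trivial. Particles of the type $\mathcal{P}$: massive particles of mass $m>0$, each described by the same GPT with state/effect/transformation sets $\mathscr{S},\mathscr{E},\mathscr{T}$ (including spacetime degrees of freedom such as momentum), whose internal degrees of freedom are described by a finite-dimensional GPT $(\mathcal{S},\mathcal{E},\mathcal{T})$ of dimension $d$. Nontrivial Poincaré Invariance: the GPT of a particle of type $\mathcal{P}$ is nontrivially invariant under $\mathfrak{Poin}$. Existence of Classical Momentum: with $p_{\text{rest}}=(m,0,\ldots,0)^{\text{t}}$ and $\Pi_{p_{\text{rest}}}=\{\Lambda p_{\text{rest}}:\Lambda\in\mathfrak{L}\}$, there are states $Z^{\text{class}}_{p,\zeta}\in\mathscr{S}$ and effects $\hat E^{\text{class}}_{p,\varepsilon}\in\mathscr{E}$ for all $p\in\Pi_{p_{\text{rest}}}$, $\zeta\in\mathcal{S}$, $\varepsilon\in\mathcal{E}$, with $\hat E^{\text{class}}_{p',\varepsilon}[Z^{\text{class}}_{p,\zeta}]=\delta(p'-p)\,\varepsilon\cdot\zeta$,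 and under $P(x,\Lambda)\in\mathfrak{Poin}$: $\hat{\mathbf{R}}^{\text{st}}(P(x,\Lambda))[Z^{\text{class}}_{p,\zeta}]=Z^{\text{class}}_{\Lambda p,\,R^{\text{st}}_p(P(x,\Lambda))\zeta}$ and $\hat{\mathbf{R}}^{\text{ef}}(P(x,\Lambda))[\hat E^{\text{class}}_{p,\varepsilon}]=\hat E^{\text{class}}_{\Lambda p,\,R^{\text{ef}}_p(P(x,\Lambda))\varepsilon}$ for some maps $R^{\text{st}}_p(P(x,\Lambda)):\mathcal{S}\to\mathcal{S}$, $R^{\text{ef}}_p(P(x,\Lambda)):\mathcal{E}\to\mathcal{E}$. *)

theory Defs
  imports "HOL-Analysis.Analysis"
begin

text \<open>Minkowski spacetime in 1+n dimensions: coordinates indexed by the type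
  'n option, where None is the time index and Some j the j-th spatial index.\<close>

type_synonym 'n spacetime = "real ^ ('n option)"
type_synonym 'n lmatrix = "real ^ ('n option) ^ ('n option)"
type_synonym 'n poincare = "'n spacetime \<times> 'n lmatrix"

definition eta :: "('n::finite) lmatrix" where
  "eta = (\<chi> i j. if i = j then (if i = None then -1 else 1) else 0)"

definition lorentz :: "('n::finite) lmatrix \<Rightarrow> bool" where
  "lorentz L \<longleftrightarrow> transpose L ** eta ** L = eta"

definition proper_lorentz :: "('n::finite) lmatrix set" where
  "proper_lorentz = {L. lorentz L \<and> det L = 1 \<and> L $ None $ None \<ge> 1}"

text \<open>Poincare transformation P(a,L) acts by x \<mapsto> L x + a.\<close>
definition poin_comp :: "('n::finite) poincare \<Rightarrow> 'n poincare \<Rightarrow> 'n poincare" where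
  "poin_comp g' g = (fst g' + snd g' *v fst g, snd g' ** snd g)"

definition poin_id :: "('n::finite) poincare" where
  "poin_id = (0, mat 1)"

definition Poin :: "('n::finite) poincare set" where
  "Poin = {g. snd g \<in> proper_lorentz}"

definition SO_mat :: "(real ^ 'n ^ 'n) set" where
  "SO_mat = {Q. orthogonal_matrix Q \<and> det Q = 1}"

definition spatial_rot :: "real ^ ('n::finite) ^ 'n \<Rightarrow> 'n lmatrix" where
  "spatial_rot Q = (\<chi> i j. case (i, j) of
        (None, None) \<Rightarrow> 1
      | (Some a, Some b) \<Rightarrow> Q $ a $ b
      | _ \<Rightarrow> 0)"

definition p_rest :: "real \<Rightarrow> ('n::finite) spacetime" where
  "p_rest m = (\<chi> i. if i = None then m else 0)"

definition mass_shell :: "real \<Rightarrow> ('n::finite) spacetime set" where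
  "mass_shell m = {L *v p_rest m | L. L \<in> proper_lorentz}"

text \<open>Finite-dimensional GPT: state vectors in R^(d+1) (index type 'k with
  d+1 = CARD('k)) whose distinguished coordinate i0 equals 1; effects are
  vectors giving outcome probabilities eps \<bullet> zeta in [0,1], containing the
  unit effect u = e_{i0} and the zero effect. Outcome probabilities determine
  the state (standard GPT convention that states are identified by their
  outcome statistics).\<close>
definition finite_gpt :: "('k::finite) \<Rightarrow> (real ^ 'k) set \<Rightarrow> (real ^ 'k) set \<Rightarrow> bool" where
  "finite_gpt i0 S E \<longleftrightarrow>
     closed S \<and> convex S \<and> (\<forall>z\<in>S. z $ i0 = 1) \<and>
     convex E \<and> axis i0 1 \<in> E \<and> 0 \<in> E \<and>
     (\<forall>e\<in>E. \<forall>z\<in>S. 0 \<le> e \<bullet> z \<and> e \<bullet> z \<le> 1) \<and>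
     (\<forall>z1\<in>S. \<forall>z2\<in>S. (\<forall>e\<in>E. e \<bullet> z1 = e \<bullet> z2) \<longrightarrow> z1 = z2)"

definition cont_gpt :: "'s set \<Rightarrow> 'e set \<Rightarrow> ('e \<Rightarrow> 's \<Rightarrow> real) \<Rightarrow> bool" where
  "cont_gpt SS EE eval \<longleftrightarrow> (\<forall>e\<in>EE. \<forall>z\<in>SS. 0 \<le> eval e z \<and> eval e z \<le> 1)"

definition is_rep :: "'g set \<Rightarrow> ('g \<Rightarrow> 'g \<Rightarrow> 'g) \<Rightarrow> 'g \<Rightarrow> 'x set \<Rightarrow> ('g \<Rightarrow> 'x \<Rightarrow> 'x) \<Rightarrow> bool" where
  "is_rep G cmp one X R \<longleftrightarrow>
     (\<forall>g\<in>G. \<forall>x\<in>X. R g x \<in> X) \<and>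
     (\<forall>x\<in>X. R one x = x) \<and>
     (\<forall>g1\<in>G. \<forall>g2\<in>G. \<forall>x\<in>X. R g2 (R g1 x) = R (cmp g2 g1) x)"

definition trivial_rep :: "'g set \<Rightarrow> 'x set \<Rightarrow> ('g \<Rightarrow> 'x \<Rightarrow> 'x) \<Rightarrow> bool" where
  "trivial_rep G X R \<longleftrightarrow> (\<forall>g\<in>G. \<forall>x\<in>X. R g x = x)"

definition nontrivially_poincare_invariant ::
  "'s set \<Rightarrow> 'e set \<Rightarrow> ('e \<Rightarrow> 's \<Rightarrow> real) \<Rightarrow>
   (('n::finite) poincare \<Rightarrow> 's \<Rightarrow> 's) \<Rightarrow> ('n poincare \<Rightarrow> 'e \<Rightarrow> 'e) \<Rightarrow> bool" where
  "nontrivially_poincare_invariant SS EE eval Rst Ref \<longleftrightarrow>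
     is_rep Poin poin_comp poin_id SS Rst \<and>
     is_rep Poin poin_comp poin_id EE Ref \<and>
     (\<forall>g\<in>Poin. \<forall>e\<in>EE. \<forall>z\<in>SS. eval (Ref g e) (Rst g z) = eval e z) \<and>
     \<not> (trivial_rep Poin SS Rst \<and> trivial_rep Poin EE Ref)"

text \<open>Existence of Classical Momentum. The delta distribution delta(p'-p) is
  rendered as the sharp (Kronecker) delta on the mass shell.\<close>
definition classical_momentum ::
  "real \<Rightarrow> (real ^ 'k) set \<Rightarrow> (real ^ 'k) set \<Rightarrow>
   's set \<Rightarrow> 'e set \<Rightarrow> ('e \<Rightarrow> 's \<Rightarrow> real) \<Rightarrow>
   (('n::finite) poincare \<Rightarrow> 's \<Rightarrow> 's) \<Rightarrow> ('n poincare \<Rightarrow> 'e \<Rightarrow> 'e) \<Rightarrow>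
   ('n spacetime \<Rightarrow> real ^ 'k \<Rightarrow> 's) \<Rightarrow> ('n spacetime \<Rightarrow> real ^ 'k \<Rightarrow> 'e) \<Rightarrow>
   ('n spacetime \<Rightarrow> 'n poincare \<Rightarrow> real ^ 'k \<Rightarrow> real ^ 'k) \<Rightarrow>
   ('n spacetime \<Rightarrow> 'n poincare \<Rightarrow> real ^ 'k \<Rightarrow> real ^ 'k) \<Rightarrow> bool" where
  "classical_momentum m S E SS EE eval Rst Ref Zc Ec RstI RefI \<longleftrightarrow>
     (\<forall>p\<in>mass_shell m. \<forall>z\<in>S. Zc p z \<in> SS) \<and>
     (\<forall>p\<in>mass_shell m. \<forall>e\<in>E. Ec p e \<in> EE) \<and>
     (\<forall>p\<in>mass_shell m. \<forall>p'\<in>mass_shell m. \<forall>z\<in>S. \<forall>e\<in>E.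
        eval (Ec p' e) (Zc p z) = (if p' = p then 1 else 0) * (e \<bullet> z)) \<and>
     (\<forall>p\<in>mass_shell m. \<forall>g\<in>Poin. \<forall>z\<in>S.
        RstI p g z \<in> S \<and> Rst g (Zc p z) = Zc (snd g *v p) (RstI p g z)) \<and>
     (\<forall>p\<in>mass_shell m. \<forall>g\<in>Poin. \<forall>e\<in>E.
        RefI p g e \<in> E \<and> Ref g (Ec p e) = Ec (snd g *v p) (RefI p g e))"

end

theory Submission
  imports Defs
begin

lemma sum_option: "sum (f :: ('n::finite) option \<Rightarrow> 'a::comm_monoid_add) UNIV = f None + (\<Sum>a\<in>UNIV. f (Some a))"
proof -
  have U: "(UNIV :: 'n option set) = insert None (range Some)" by (auto intro: option.exhaust)
  have "sum f (insert None (range Some)) = f None + sum f (range Some)" by (subst sum.insert) auto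
  also have "sum f (range Some) = (\<Sum>a\<in>UNIV. f (Some a))" by (subst sum.reindex) auto
  finally show ?thesis by (simp add: U)
qed

lemma prod_option: "prod (f :: ('n::finite) option \<Rightarrow> 'a::comm_monoid_mult) UNIV = f None * (\<Prod>a\<in>UNIV. f (Some a))"
proof -
  have U: "(UNIV :: 'n option set) = insert None (range Some)" by (auto intro: option.exhaust)
  have "prod f (insert None (range Some)) = f None * prod f (range Some)" by (subst prod.insert) auto
  also have "prod f (range Some) = (\<Prod>a\<in>UNIV. f (Some a))" by (subst prod.reindex) auto
  finally show ?thesis by (simp add: U)
qed

lemma sr_None_None[simp]: "spatial_rot Q $ None $ None = 1"
  and sr_None_Some[simp]: "spatial_rot Q $ None $ Some b = 0"
  and sr_Some_None[simp]: "spatial_rot Q $ Some a $ None = 0"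
  and sr_Some_Some[simp]: "spatial_rot Q $ Some a $ Some b = Q $ a $ b"
  by (simp_all add: spatial_rot_def)

lemma sr_mult: "spatial_rot A ** spatial_rot B = spatial_rot (A ** B)"
  apply (simp add: vec_eq_iff matrix_matrix_mult_def sum_option)
  apply (intro allI)
  subgoal for i j by (cases i; cases j) auto
  done

lemma sr_transpose: "transpose (spatial_rot A) = spatial_rot (transpose A)"
  apply (simp add: vec_eq_iff transpose_def)
  apply (intro allI)
  subgoal for i j by (cases i; cases j) auto
  done

lemma sr_one: "spatial_rot (mat 1) = mat 1"
  apply (simp add: vec_eq_iff mat_def)
  apply (intro allI)
  subgoal for i j by (cases i; cases j) auto
  done

lemma ite_mult1: "(if P then 1 else (0::real)) * x = (if P then x else 0)" by simp
lemma ite_mult2: "x * (if P then 1 else (0::real)) = (if P then x else 0)" by simp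

lemma eta_sr: "eta ** spatial_rot A = spatial_rot A ** eta"
  apply (simp add: vec_eq_iff)
  apply (intro allI)
  subgoal for i j by (cases i; cases j) (auto simp: matrix_matrix_mult_def sum_option eta_def ite_mult1 ite_mult2 cong: if_cong)
  done

lemma sr_pr: "spatial_rot A *v p_rest m = p_rest m"
  apply (simp add: vec_eq_iff matrix_vector_mult_def sum_option p_rest_def)
  apply (intro allI)
  subgoal for i by (cases i) auto
  done

lemma sr_lorentz: "orthogonal_matrix Q \<Longrightarrow> lorentz (spatial_rot Q)"
  unfolding lorentz_def
  by (simp add: matrix_mul_assoc[symmetric] eta_sr sr_transpose sr_mult orthogonal_matrix_def sr_one)
    (simp add: matrix_mul_assoc eta_sr sr_mult orthogonal_matrix_def sr_one)

lemma map_option_permutes: assumes "q permutes (UNIV::'n set)" shows "map_option q permutes (UNIV :: 'n option set)"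
proof -
  have bq: "bij q" using assms by (simp add: permutes_bij)
  have "inj (map_option q)" using bq by (simp add: bij_is_inj option.inj_map)
  moreover have "surj (map_option q)"
  proof -
    have "y \<in> range (map_option q)" for y
    proof (cases y)
      case None then show ?thesis by (metis option.map(1) rangeI)
    next
      case (Some b)
      obtain a where "q a = b" using bq by (metis bij_pointE)
      then show ?thesis using Some by (metis option.map(2) rangeI)
    qed
    then show ?thesis by auto
  qed
  ultimately have "bij (map_option q)" by (simp add: bij_def)
  then show ?thesis by (intro bij_imp_permutes) auto
qed

lemma sign_map_option: assumes "q permutes (UNIV::('n::finite) set)" shows "sign (map_option q) = sign q"
proof -
  have "map_permutation UNIV Some q = map_option q"
    unfolding fun_eq_iff map_permutation_def restrict_id_def
  proof
    fix x :: "'n option" show "(if x \<in> range Some then (Some \<circ> q \<circ> inv_into UNIV Some) x else x) = map_option q x"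
      by (cases x) auto
  qed
  with sign_map_permutation[of Some UNIV q] assms show ?thesis by simp
qed

lemma det_sr: "det (spatial_rot (Q :: real^('n::finite)^'n)) = det Q"
proof -
  let ?A = "spatial_rot Q"
  let ?P = "{p. p permutes (UNIV :: 'n option set)}"
  let ?PN = "{p. p permutes (UNIV :: 'n option set) \<and> p None = None}"
  let ?t = "\<lambda>p. of_int (sign p) * (\<Prod>i\<in>UNIV. ?A $ i $ p i)"
  have "det ?A = sum ?t ?P" unfolding det_def by (rule refl)
  also have "\<dots> = sum ?t ?PN"
  proof -
    have f: "finite ?P" by (simp add: finite_permutations)
    have s: "?PN \<subseteq> ?P" by auto
    have z: "\<forall>p\<in>?P - ?PN. ?t p = 0"
    proof
      fix p assume "p \<in> ?P - ?PN"
      then obtain b where "p None = Some b" by auto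
      then show "?t p = 0" by (simp add: prod_option)
    qed
    show ?thesis using sum.mono_neutral_left[OF f s z] by simp
  qed
  also have "?PN = map_option ` {q. q permutes (UNIV::'n set)}"
  proof
    show "map_option ` {q. q permutes UNIV} \<subseteq> ?PN" using map_option_permutes by blast
    show "?PN \<subseteq> map_option ` {q. q permutes UNIV}"
    proof
      fix p assume p: "p \<in> ?PN"
      hence bp: "bij p" and pN: "p None = None" by (auto simp: permutes_bij)
      have ns: "p (Some a) \<noteq> None" for a using bp pN by (metis bij_is_inj injD option.distinct(1))
      define q where "q a = the (p (Some a))" for a
      have pq: "p = map_option q"
      proof
        fix x show "p x = map_option q x"
        proof (cases x)
          case None then show ?thesis using pN by simp
        next
          case (Some a) then show ?thesis using ns[of a] by (auto simp: q_def)
        qed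
      qed
      have "q permutes UNIV" unfolding permutes_univ
      proof
        fix y
        have "\<exists>x. p x = Some y \<and> (\<forall>x'. p x' = Some y \<longrightarrow> x' = x)"
          using bp by (metis bij_pointE)
        then obtain x where x: "p x = Some y" "\<And>x'. p x' = Some y \<Longrightarrow> x' = x" by blast
        from x(1) pN obtain a where a: "x = Some a" by (cases x) auto
        show "\<exists>!x. q x = y"
        proof
          show "q a = y" using x(1) a by (simp add: q_def)
          fix a' assume "q a' = y"
          hence "p (Some a') = Some y" using ns[of a'] by (auto simp: q_def)
          from x(2)[OF this] show "a' = a" using a by simp
        qed
      qed
      then show "p \<in> map_option ` {q. q permutes UNIV}" unfolding pq by (intro imageI) simp
    qed
  qed
  also have "sum ?t (map_option ` {q. q permutes (UNIV::'n set)}) = sum (?t \<circ> map_option) {q. q permutes (UNIV::'n set)}"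
  proof (rule sum.reindex, rule inj_onI)
    fix q1 q2 :: "'n \<Rightarrow> 'n" assume "map_option q1 = map_option q2"
    then have "map_option q1 (Some x) = map_option q2 (Some x)" for x by simp
    then show "q1 = q2" by (simp add: fun_eq_iff)
  qed
  also have "\<dots> = det Q" unfolding det_def
    by (intro sum.cong refl) (simp add: sign_map_option prod_option)
  finally show ?thesis .
qed

lemma sr_proper: "Q \<in> SO_mat \<Longrightarrow> spatial_rot Q \<in> proper_lorentz"
  by (simp add: SO_mat_def proper_lorentz_def sr_lorentz det_sr)

lemma SO_mult: "A \<in> SO_mat \<Longrightarrow> B \<in> SO_mat \<Longrightarrow> A ** B \<in> SO_mat"
  by (simp add: SO_mat_def orthogonal_matrix_mul det_mul)

lemma SO_one: "mat 1 \<in> SO_mat"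
  by (simp add: SO_mat_def orthogonal_matrix_id)

lemma prest_shell: "(p_rest m :: ('n::finite) spacetime) \<in> mass_shell m"
proof -
  have "spatial_rot (mat 1) *v (p_rest m :: 'n spacetime) = p_rest m" by (rule sr_pr)
  moreover have "spatial_rot (mat 1 :: real^'n^'n) \<in> proper_lorentz" by (rule sr_proper[OF SO_one])
  ultimately show ?thesis unfolding mass_shell_def by (metis (mono_tags, lifting) CollectI)
qed

theorem lemma1:
  fixes m :: real
    and i0 :: "'k::finite"
    and S E :: "(real ^ 'k) set"
    and SS :: "'s set" and EE :: "'e set" and eval :: "'e \<Rightarrow> 's \<Rightarrow> real"
    and Rst :: "('n::finite) poincare \<Rightarrow> 's \<Rightarrow> 's"
    and Ref :: "'n poincare \<Rightarrow> 'e \<Rightarrow> 'e"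
    and Zc :: "'n spacetime \<Rightarrow> real ^ 'k \<Rightarrow> 's"
    and Ec :: "'n spacetime \<Rightarrow> real ^ 'k \<Rightarrow> 'e"
    and RstI RefI :: "'n spacetime \<Rightarrow> 'n poincare \<Rightarrow> real ^ 'k \<Rightarrow> real ^ 'k"
  assumes "m > 0"
    and "finite_gpt i0 S E"
    and "cont_gpt SS EE eval"
    and "nontrivially_poincare_invariant SS EE eval Rst Ref"
    and "classical_momentum m S E SS EE eval Rst Ref Zc Ec RstI RefI"
    and "O1 \<in> SO_mat" and "O2 \<in> SO_mat"
    and "z \<in> S"
  shows "RstI (p_rest m) (0, spatial_rot O2) (RstI (p_rest m) (0, spatial_rot O1) z)
         = RstI (p_rest m) (0, spatial_rot O2 ** spatial_rot O1) z"
proof -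
  let ?p = "p_rest m :: 'n spacetime"
  define g1 where "g1 = ((0::'n spacetime), spatial_rot O1)"
  define g2 where "g2 = ((0::'n spacetime), spatial_rot O2)"
  define g12 where "g12 = ((0::'n spacetime), spatial_rot O2 ** spatial_rot O1)"
  have pm: "?p \<in> mass_shell m" by (rule prest_shell)
  have g1P: "g1 \<in> Poin" using assms(6) by (simp add: g1_def Poin_def sr_proper)
  have g2P: "g2 \<in> Poin" using assms(7) by (simp add: g2_def Poin_def sr_proper)
  have g12P: "g12 \<in> Poin" using assms(6,7) by (simp add: g12_def Poin_def sr_proper sr_mult SO_mult)
  have comp: "poin_comp g2 g1 = g12" by (simp add: poin_comp_def g1_def g2_def g12_def)
  have fix1: "snd g1 *v ?p = ?p" "snd g2 *v ?p = ?p" "snd g12 *v ?p = ?p"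
    by (simp_all add: g1_def g2_def g12_def sr_mult sr_pr)
  have CM1: "\<forall>p\<in>mass_shell m. \<forall>z\<in>S. Zc p z \<in> SS"
    and CM3: "\<forall>p\<in>mass_shell m. \<forall>p'\<in>mass_shell m. \<forall>z\<in>S. \<forall>e\<in>E.
        eval (Ec p' e) (Zc p z) = (if p' = p then 1 else 0) * (e \<bullet> z)"
    and CM4: "\<forall>p\<in>mass_shell m. \<forall>g\<in>Poin. \<forall>z\<in>S.
        RstI p g z \<in> S \<and> Rst g (Zc p z) = Zc (snd g *v p) (RstI p g z)"
    using assms(5) unfolding classical_momentum_def by blast+
  have NI: "\<forall>g1\<in>Poin. \<forall>g2\<in>Poin. \<forall>x\<in>SS. Rst g2 (Rst g1 x) = Rst (poin_comp g2 g1) x"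
    using assms(4) unfolding nontrivially_poincare_invariant_def is_rep_def by blast
  have G: "\<forall>z1\<in>S. \<forall>z2\<in>S. (\<forall>e\<in>E. e \<bullet> z1 = e \<bullet> z2) \<longrightarrow> z1 = z2"
    using assms(2) unfolding finite_gpt_def by blast
  have C4: "RstI ?p g z \<in> S \<and> Rst g (Zc ?p z') = Zc ?p (RstI ?p g z')"
    if "g \<in> Poin" "z \<in> S" "z' \<in> S" "snd g *v ?p = ?p" "z' = z" for g z z'
    using CM4[rule_format, OF pm that(1) that(2)] that by simp
  define a where "a = RstI ?p g2 (RstI ?p g1 z)"
  define b where "b = RstI ?p g12 z"
  have z1: "RstI ?p g1 z \<in> S" and e1: "Rst g1 (Zc ?p z) = Zc ?p (RstI ?p g1 z)"
    using C4[OF g1P assms(8) assms(8) fix1(1) refl] by auto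
  have aS: "a \<in> S" and e2: "Rst g2 (Zc ?p (RstI ?p g1 z)) = Zc ?p a"
    using C4[OF g2P z1 z1 fix1(2) refl] unfolding a_def by auto
  have bS: "b \<in> S" and e3: "Rst g12 (Zc ?p z) = Zc ?p b"
    using C4[OF g12P assms(8) assms(8) fix1(3) refl] unfolding b_def by auto
  have zS: "Zc ?p z \<in> SS" using CM1 pm assms(8) by blast
  have "Rst g2 (Rst g1 (Zc ?p z)) = Rst (poin_comp g2 g1) (Zc ?p z)"
    using NI g1P g2P zS by blast
  hence Zeq: "Zc ?p a = Zc ?p b" using e1 e2 e3 comp by simp
  have "\<forall>e\<in>E. e \<bullet> a = e \<bullet> b"
  proof
    fix e assume eE: "e \<in> E"
    have "eval (Ec ?p e) (Zc ?p a) = e \<bullet> a" using CM3[rule_format, OF pm pm aS eE] by simp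
    moreover have "eval (Ec ?p e) (Zc ?p b) = e \<bullet> b" using CM3[rule_format, OF pm pm bS eE] by simp
    ultimately show "e \<bullet> a = e \<bullet> b" using Zeq by simp
  qed
  hence "a = b" using G aS bS by blast
  then show ?thesis by (simp add: a_def b_def g1_def g2_def g12_def)
qed

end
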